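(* Let $e_1,\dots,e_p\in\mathbb{C}^m$ and $f_1,\dots,f_p\in\mathbb{C}^n$ be unit vectors with $[e_1]=[e_2]=\cdots=[e_p]$. Then the face $F$ of $S$ generated by the states $\{\omega_{e_i\otimes f_i}:1\le i\le p\}$ is also a face of $K$; namely it is the face of $K$ associated with the subspace $L=e_1\otimes\operatorname{Span}\{f_1,\dots,f_p\}$ of $\mathbb{C}^m\otimes\mathbb{C}^n$, and $F$ is affinely isomorphic to the state space of $\mathcal{B}(L)$.
   Context: $\mathcal{B}(\mathbb{C}^m\otimes\mathbb{C}^n)$ is identified with $\mathcal{B}(\mathbb{C}^m)\otimes\mathcal{B}(\mathbb{C}^n)$. $K$ denotes the state space of $\mathcal{B}(\mathbb{C}^m\otimes\mathbb{C}^n)$ and $S\subseteq K$ the convex set of separable states, i.e. convex combinations of product states $\omega\otimes\sigma$; equivalently, convex combinations of pure product states $\omega_{x\otimes y}$ ($x\in\mathbb{C}^m$, $y\in\mathbb{C}^n$ unit vectors), where $\omega_z(A)=(Az,z)$. $[x]$ denotes the line spanned by $x$. The face of a convex set generated by a subset is the smallest face containing it. The face of $K$ associated with a subspace $M$ of $\mathbb{C}^m\otimes\mathbb{C}^n$ with projection $Q$ is $\{\omega\in K:\omega(Q)=1\}$, the convex hull of vector states $\omega_z$, $z\in M$ a unit vector. *)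

theory Defs
  imports "HOL-Analysis.Analysis" "HOL-Library.Function_Algebras"
begin

text \<open>Pointwise real vector space structure on functions (used to form convex
  combinations of linear functionals, i.e. of states).\<close>

instantiation "fun" :: (type, real_vector) real_vector
begin
definition scaleR_fun :: "real \<Rightarrow> ('a \<Rightarrow> 'b) \<Rightarrow> 'a \<Rightarrow> 'b"
  where "scaleR_fun r f = (\<lambda>x. r *\<^sub>R f x)"
instance
  by standard (auto simp: scaleR_fun_def fun_eq_iff algebra_simps plus_fun_def)
end

text \<open>Complex inner product (linear in the first argument): (x,y) = sum x_i conj(y_i).\<close>
definition cinner :: "complex^'k \<Rightarrow> complex^'k \<Rightarrow> complex" where
  "cinner x y = (\<Sum>i\<in>UNIV. x$i * cnj (y$i))"

definition cline :: "complex^'k \<Rightarrow> (complex^'k) set" where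
  "cline x = range (\<lambda>c. c *s x)"

definition cspan :: "(complex^'k) set \<Rightarrow> (complex^'k) set" where
  "cspan S = {(\<Sum>v\<in>T. c v *s v) | T c. finite T \<and> T \<subseteq> S}"

text \<open>C^m \<otimes> C^n is identified with C^(m \<times> n); B(C^m \<otimes> C^n) with matrices.\<close>
definition tensor :: "complex^'m \<Rightarrow> complex^'n \<Rightarrow> complex^('m \<times> 'n)" where
  "tensor x y = (\<chi> ij. x$(fst ij) * y$(snd ij))"

definition cadj :: "complex^'k^'k \<Rightarrow> complex^'k^'k" where
  "cadj A = (\<chi> i j. cnj (A$j$i))"

definition cmat_smult :: "complex \<Rightarrow> complex^'k^'k \<Rightarrow> complex^'k^'k" where
  "cmat_smult c A = (\<chi> i j. c * A$i$j)"

definition is_state :: "(complex^'k^'k \<Rightarrow> complex) \<Rightarrow> bool" where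
  "is_state \<omega> \<longleftrightarrow>
     (\<forall>A B. \<omega> (A + B) = \<omega> A + \<omega> B) \<and>
     (\<forall>c A. \<omega> (cmat_smult c A) = c * \<omega> A) \<and>
     (\<forall>A. \<omega> (cadj A ** A) \<in> \<real> \<and> 0 \<le> Re (\<omega> (cadj A ** A))) \<and>
     \<omega> (mat 1) = 1"

definition state_space :: "(complex^'k^'k \<Rightarrow> complex) set" where
  "state_space = {\<omega>. is_state \<omega>}"

definition vstate :: "complex^'k \<Rightarrow> complex^'k^'k \<Rightarrow> complex" where
  "vstate z = (\<lambda>A. cinner (A *v z) z)"

definition sep_states :: "(complex^('m::finite \<times> 'n::finite)^('m \<times> 'n) \<Rightarrow> complex) set" where
  "sep_states = convex hull
     {vstate (tensor (x::complex^'m::finite) (y::complex^'n::finite)) | x y. norm x = 1 \<and> norm y = 1}"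

definition face_generated :: "'a::real_vector set \<Rightarrow> 'a set \<Rightarrow> 'a set" where
  "face_generated X C = \<Inter>{G. G face_of C \<and> X \<subseteq> G}"

definition is_orth_proj :: "complex^'k^'k \<Rightarrow> (complex^'k) set \<Rightarrow> bool" where
  "is_orth_proj Q M \<longleftrightarrow> cadj Q = Q \<and> Q ** Q = Q \<and> range (\<lambda>v. Q *v v) = M"

text \<open>B(L) for a subspace L of C^k: linear operators on L, represented by maps
  vanishing outside L (so that each operator has a unique representative).\<close>
definition bounded_ops_on :: "(complex^'k) set \<Rightarrow> (complex^'k \<Rightarrow> complex^'k) set" where
  "bounded_ops_on L = {T. (\<forall>x\<in>L. T x \<in> L) \<and>
      (\<forall>x\<in>L. \<forall>y\<in>L. T (x + y) = T x + T y) \<and>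
      (\<forall>c. \<forall>x\<in>L. T (c *s x) = c *s T x) \<and>
      (\<forall>x. x \<notin> L \<longrightarrow> T x = 0)}"

definition id_on :: "(complex^'k) set \<Rightarrow> complex^'k \<Rightarrow> complex^'k" where
  "id_on L = (\<lambda>x. if x \<in> L then x else 0)"

text \<open>States of B(L): complex-linear functionals on B(L), with phi(T* T) \<ge> 0
  (T* the adjoint of T on L), phi(1_L) = 1; extended by 0 outside B(L).\<close>
definition is_state_on :: "(complex^'k) set \<Rightarrow> ((complex^'k \<Rightarrow> complex^'k) \<Rightarrow> complex) \<Rightarrow> bool" where
  "is_state_on L \<phi> \<longleftrightarrow>
     (\<forall>T\<in>bounded_ops_on L. \<forall>S\<in>bounded_ops_on L. \<phi> (\<lambda>x. T x + S x) = \<phi> T + \<phi> S) \<and>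
     (\<forall>c. \<forall>T\<in>bounded_ops_on L. \<phi> (\<lambda>x. c *s T x) = c * \<phi> T) \<and>
     (\<forall>T\<in>bounded_ops_on L. \<forall>S\<in>bounded_ops_on L.
         (\<forall>x\<in>L. \<forall>y\<in>L. cinner (T x) y = cinner x (S y)) \<longrightarrow>
         \<phi> (S \<circ> T) \<in> \<real> \<and> 0 \<le> Re (\<phi> (S \<circ> T))) \<and>
     \<phi> (id_on L) = 1 \<and>
     (\<forall>T. T \<notin> bounded_ops_on L \<longrightarrow> \<phi> T = 0)"

definition state_space_on :: "(complex^'k) set \<Rightarrow> ((complex^'k \<Rightarrow> complex^'k) \<Rightarrow> complex) set" where
  "state_space_on L = {\<phi>. is_state_on L \<phi>}"

definition affinely_isomorphic :: "'a::real_vector set \<Rightarrow> 'b::real_vector set \<Rightarrow> bool" where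
  "affinely_isomorphic A B \<longleftrightarrow> (\<exists>\<Phi>. bij_betw \<Phi> A B \<and>
     (\<forall>x\<in>A. \<forall>y\<in>A. \<forall>t\<in>{0..1}.
        \<Phi> ((1 - t) *\<^sub>R x + t *\<^sub>R y) = (1 - t) *\<^sub>R \<Phi> x + t *\<^sub>R \<Phi> y))"

end

theory Submission
  imports Defs
begin

lemma sum_fun_apply: "(sum F A :: 'a \<Rightarrow> 'b::real_vector) x = (\<Sum>a\<in>A. F a x)"
  by (induction A rule: infinite_finite_induct) auto

lemma scaleR_fun_apply [simp]: "(r *\<^sub>R f) x = r *\<^sub>R f x"
  by (simp add: scaleR_fun_def)

definition outer :: "complex^'k \<Rightarrow> complex^'k \<Rightarrow> complex^'k^'k" where
  "outer x y = (\<chi> a b. x$a * cnj (y$b))"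

definition nn :: "complex \<Rightarrow> bool" where "nn c \<longleftrightarrow> c \<in> \<real> \<and> 0 \<le> Re c"

lemma nn_iff: "nn c \<longleftrightarrow> Im c = 0 \<and> 0 \<le> Re c"
  by (simp add: nn_def complex_is_Real_iff)

lemma nn_add: "nn a \<Longrightarrow> nn b \<Longrightarrow> nn (a + b)" by (simp add: nn_iff)
lemma nn_sum: "(\<And>i. i \<in> A \<Longrightarrow> nn (f i)) \<Longrightarrow> nn (sum f A)"
  by (induction A rule: infinite_finite_induct) (auto simp: nn_iff)
lemma nn_of_real: "0 \<le> r \<Longrightarrow> nn (of_real r)" by (simp add: nn_iff)

lemma ifmult1 [simp]: "(if P then 1 else 0) * (x::complex) = (if P then x else 0)" by simp
lemma ifmult2 [simp]: "(x::complex) * (if P then 1 else 0) = (if P then x else 0)" by simp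

lemma cnj_if01 [simp]: "cnj (if P then 1 else 0) = (if P then 1 else (0::complex))" by simp
lemma axis_nth1: "axis i (1::complex) $ j = (if j = i then 1 else 0)"
  by (simp add: axis_def)
lemma cnj_axis_nth1: "cnj (axis i (1::complex) $ j) = (if j = i then 1 else 0)"
  by (simp add: axis_def)
lemma ifmult3 [simp]: "(x::complex) * (if P then y else 0) = (if P then x * y else 0)" by simp

lemma cinner_add_left: "cinner (x + y) z = cinner x z + cinner y z"
  by (simp add: cinner_def sum.distrib distrib_right)
lemma cinner_add_right: "cinner x (y + z) = cinner x y + cinner x z"
  by (simp add: cinner_def sum.distrib distrib_left)
lemma cinner_diff_left: "cinner (x - y) z = cinner x z - cinner y z"
  by (simp add: cinner_def sum_subtractf left_diff_distrib)
lemma cinner_diff_right: "cinner x (y - z) = cinner x y - cinner x z"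
  by (simp add: cinner_def sum_subtractf right_diff_distrib)
lemma cinner_scale_left: "cinner (c *s x) y = c * cinner x y"
  by (simp add: cinner_def sum_distrib_left mult.assoc)
lemma cinner_scale_right: "cinner x (c *s y) = cnj c * cinner x y"
  by (simp add: cinner_def sum_distrib_left mult_ac)
lemma cinner_zero_left [simp]: "cinner 0 y = 0" by (simp add: cinner_def)
lemma cinner_zero_right [simp]: "cinner x 0 = 0" by (simp add: cinner_def)
lemma cinner_commute: "cinner y x = cnj (cinner x y)"
  by (simp add: cinner_def mult.commute)
lemma cinner_sum_left: "cinner (sum g A) y = (\<Sum>a\<in>A. cinner (g a) y)"
  by (induction A rule: infinite_finite_induct) (auto simp: cinner_add_left)
lemma cinner_sum_right: "cinner y (sum g A) = (\<Sum>a\<in>A. cinner y (g a))"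
  by (induction A rule: infinite_finite_induct) (auto simp: cinner_add_right)

lemma cinner_self: "cinner x x = of_real ((norm x)\<^sup>2)"
proof -
  have "(norm x)\<^sup>2 = (\<Sum>i\<in>UNIV. (cmod (x$i))\<^sup>2)"
    by (simp add: norm_vec_def L2_set_def sum_nonneg)
  then have "of_real ((norm x)\<^sup>2) = (\<Sum>i\<in>UNIV. complex_of_real ((cmod (x$i))\<^sup>2))"
    by simp
  also have "\<dots> = (\<Sum>i\<in>UNIV. x$i * cnj (x$i))"
    by (rule sum.cong) (auto simp only: complex_norm_square)
  finally show ?thesis by (simp add: cinner_def)
qed

lemma cinner_self_eq_0: "cinner x x = 0 \<longleftrightarrow> x = 0"
  by (simp add: cinner_self)

lemma inner_cinner: "x \<bullet> y = Re (cinner x y)"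
  by (simp add: inner_vec_def cinner_def inner_complex_def Re_sum)

lemma cinner_axis_left [simp]: "cinner (axis i 1) v = cnj (v$i)"
  by (simp add: cinner_def axis_nth1 cnj_axis_nth1)
lemma cinner_axis_right [simp]: "cinner v (axis i 1) = v$i"
  by (simp add: cinner_def axis_nth1 cnj_axis_nth1)

lemma cinner_adj: "cinner (A *v x) y = cinner x (cadj A *v y)"
  unfolding cinner_def cadj_def matrix_vector_mult_def
  by (simp add: sum_distrib_left sum_distrib_right mult_ac) (rule sum.swap)

lemma cinner_adj': "cinner x (A *v y) = cinner (cadj A *v x) y"
  by (metis cinner_commute cinner_adj)

lemma vec_eq_cinner: "(\<And>x. cinner x u = cinner x v) \<Longrightarrow> u = v"
  by (metis cinner_axis_left complex_cnj_cancel_iff vec_eq_iff)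

lemma mat_eq_cinner: "(\<And>x y. cinner x (A *v y) = cinner x (B *v y)) \<Longrightarrow> A = B"
  by (metis matrix_eq vec_eq_cinner)

lemma cadj_cadj [simp]: "cadj (cadj A) = A" by (simp add: cadj_def vec_eq_iff)
lemma cadj_mult: "cadj (A ** B) = cadj B ** cadj A"
  by (simp add: cadj_def matrix_matrix_mult_def vec_eq_iff mult.commute)
lemma cadj_add: "cadj (A + B) = cadj A + cadj B" by (simp add: cadj_def vec_eq_iff)
lemma cadj_diff: "cadj (A - B) = cadj A - cadj B" by (simp add: cadj_def vec_eq_iff)
lemma cadj_one [simp]: "cadj (mat 1) = mat 1" by (simp add: cadj_def mat_def vec_eq_iff)

lemma cmat_smult_mv: "cmat_smult c A *v x = c *s (A *v x)"
  by (simp add: cmat_smult_def matrix_vector_mult_def vec_eq_iff sum_distrib_left mult.assoc)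
lemma mv_scale: "(A::complex^'a^'b) *v (c *s x) = c *s (A *v x)"
  unfolding matrix_vector_mult_def vec_eq_iff
  by (auto simp: sum_distrib_left mult_ac intro!: sum.cong)

lemma outer_mv: "outer x y *v z = cinner z y *s x"
  by (simp add: outer_def matrix_vector_mult_def cinner_def vec_eq_iff sum_distrib_left mult_ac)

lemma cadj_outer: "cadj (outer x y) = outer y x"
  by (simp add: cadj_def outer_def vec_eq_iff mult.commute)

lemma outer_mult: "outer a b ** outer c d = cmat_smult (cinner c b) (outer a d)"
  by (simp add: outer_def matrix_matrix_mult_def cmat_smult_def cinner_def vec_eq_iff
      sum_distrib_left sum_distrib_right mult_ac)

lemma cadj_mult_self_sum: "cadj A ** A = (\<Sum>k\<in>UNIV. outer (\<chi> i. cnj (A$k$i)) (\<chi> i. cnj (A$k$i)))"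
  by (simp add: cadj_def outer_def matrix_matrix_mult_def vec_eq_iff sum_component)

lemma mat_expand: "M = (\<Sum>i\<in>UNIV. \<Sum>j\<in>UNIV. cmat_smult (M$i$j) (outer (axis i 1) (axis j 1)))"
  by (simp add: vec_eq_iff sum_component cmat_smult_def outer_def axis_nth1 cnj_axis_nth1)

definition lin :: "(complex^'k^'k \<Rightarrow> complex) \<Rightarrow> bool" where
  "lin \<omega> \<longleftrightarrow> (\<forall>A B. \<omega> (A + B) = \<omega> A + \<omega> B) \<and> (\<forall>c A. \<omega> (cmat_smult c A) = c * \<omega> A)"
definition pos :: "(complex^'k^'k \<Rightarrow> complex) \<Rightarrow> bool" where
  "pos \<omega> \<longleftrightarrow> (\<forall>A. nn (\<omega> (cadj A ** A)))"

lemma is_state_alt: "is_state \<omega> \<longleftrightarrow> lin \<omega> \<and> pos \<omega> \<and> \<omega> (mat 1) = 1"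
  by (auto simp: is_state_def lin_def pos_def nn_def)

abbreviation E :: "'k \<Rightarrow> 'k \<Rightarrow> complex^'k^'k::finite" where
  "E i j \<equiv> outer (axis i 1) (axis j 1)"

lemma lin_add: "lin \<omega> \<Longrightarrow> \<omega> (A + B) = \<omega> A + \<omega> B" by (simp add: lin_def)
lemma lin_smult: "lin \<omega> \<Longrightarrow> \<omega> (cmat_smult c A) = c * \<omega> A" by (simp add: lin_def)
lemma lin_zero: "lin \<omega> \<Longrightarrow> \<omega> 0 = 0"
  using lin_add[of \<omega> 0 0] by simp
lemma lin_diff: "lin \<omega> \<Longrightarrow> \<omega> (A - B) = \<omega> A - \<omega> B"
  using lin_add[of \<omega> "A - B" B] by simp
lemma lin_sum: "lin \<omega> \<Longrightarrow> \<omega> (sum G S) = (\<Sum>s\<in>S. \<omega> (G s))"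
  by (induction S rule: infinite_finite_induct) (auto simp: lin_zero lin_add)

lemma lin_dens: "lin \<omega> \<Longrightarrow> \<omega> M = (\<Sum>i\<in>UNIV. \<Sum>j\<in>UNIV. M$i$j * \<omega> (E i j))"
  apply (subst mat_expand)
  by (simp add: lin_sum lin_smult)

lemma lin_outer: "lin \<omega> \<Longrightarrow> \<omega> (outer x y) = (\<Sum>i\<in>UNIV. \<Sum>j\<in>UNIV. x$i * cnj (y$j) * \<omega> (E i j))"
  by (subst lin_dens) (auto simp: outer_def)

lemma cmat_smult_one [simp]: "cmat_smult 1 M = M" by (simp add: cmat_smult_def vec_eq_iff)

lemma outer_self_adj: "outer x x = cadj (outer (axis k 1) x) ** outer (axis k 1) x"
  by (simp add: cadj_outer outer_mult)

lemma pos_iff: "lin \<omega> \<Longrightarrow> pos \<omega> \<longleftrightarrow> (\<forall>x. nn (\<omega> (outer x x)))"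
proof
  assume "pos \<omega>"
  then show "\<forall>x. nn (\<omega> (outer x x))"
    unfolding pos_def by (metis outer_self_adj)
next
  assume l: "lin \<omega>" and h: "\<forall>x. nn (\<omega> (outer x x))"
  show "pos \<omega>" unfolding pos_def
  proof
    fix A :: "complex^'a^'a"
    show "nn (\<omega> (cadj A ** A))"
      by (subst cadj_mult_self_sum) (simp add: lin_sum[OF l] nn_sum h)
  qed
qed

lemma lin_vstate: "lin (vstate z)"
  by (simp add: lin_def vstate_def matrix_vector_mult_add_rdistrib cinner_add_left cmat_smult_mv cinner_scale_left)

lemma vstate_outer: "vstate z (outer x y) = cinner z y * cinner x z"
  by (simp add: vstate_def outer_mv cinner_scale_left)

lemma vstate_adj: "vstate z (cadj A ** A) = of_real ((norm (A *v z))\<^sup>2)"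
proof -
  have "vstate z (cadj A ** A) = cinner (cadj A *v (A *v z)) z"
    by (simp add: vstate_def matrix_vector_mul_assoc)
  also have "\<dots> = cinner (A *v z) (A *v z)"
    using cinner_adj[of "cadj A" "A *v z" z] by simp
  finally show ?thesis by (simp add: cinner_self)
qed

lemma pos_vstate: "pos (vstate z)"
  unfolding pos_def vstate_adj by (metis nn_of_real zero_le_power2)

lemma outer_expand: "outer (x + c *s y) (x + c *s y) =
   outer x x + cmat_smult (cnj c) (outer x y) + cmat_smult c (outer y x) + cmat_smult (c * cnj c) (outer y y)"
  by (simp add: outer_def cmat_smult_def vec_eq_iff algebra_simps)

lemma q_expand: "lin \<omega> \<Longrightarrow> \<omega> (outer (x + c *s y) (x + c *s y)) =
   \<omega> (outer x x) + cnj c * \<omega> (outer x y) + c * \<omega> (outer y x) + c * cnj c * \<omega> (outer y y)"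
  by (simp add: outer_expand lin_add lin_smult)

lemma herm:
  assumes l: "lin \<omega>" and p: "pos \<omega>"
  shows "\<omega> (outer y x) = cnj (\<omega> (outer x y))"
proof -
  have nq: "\<And>v. nn (\<omega> (outer v v))" using pos_iff[OF l] p by blast
  have 1: "Im (\<omega> (outer x y) + \<omega> (outer y x)) = 0"
    using nq[of "x + 1 *s y"] nq[of x] nq[of y] unfolding q_expand[OF l] by (simp add: nn_iff)
  have 2: "Re (\<omega> (outer y x)) - Re (\<omega> (outer x y)) = 0"
    using nq[of "x + \<i> *s y"] nq[of x] nq[of y] unfolding q_expand[OF l] by (simp add: nn_iff)
  show ?thesis using 1 2 by (simp add: complex_eq_iff)
qed

lemma disc:
  fixes A B C :: real
  assumes h: "\<And>s. 0 \<le> A - 2 * s * B + s\<^sup>2 * C" and C: "0 \<le> C"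
  shows "B\<^sup>2 \<le> A * C"
proof (cases "C > 0")
  case True
  have "0 \<le> A - 2 * (B / C) * B + (B / C)\<^sup>2 * C" by (rule h)
  also have "\<dots> = A - B\<^sup>2 / C" using True by (simp add: power2_eq_square field_simps)
  finally show ?thesis using True by (simp add: field_simps)
next
  case False
  then have C0: "C = 0" using C by simp
  have "B = 0"
  proof (rule ccontr)
    assume "B \<noteq> 0"
    have "0 \<le> A - 2 * ((A + 1) / (2 * B)) * B + ((A + 1) / (2 * B))\<^sup>2 * C" by (rule h)
    also have "\<dots> = -1" using \<open>B \<noteq> 0\<close> C0 by (simp add: field_simps)
    finally show False by simp
  qed
  then show ?thesis using h[of 0] C0 by simp
qed

lemma cs:
  assumes l: "lin \<omega>" and p: "pos \<omega>"
  shows "(cmod (\<omega> (outer x y)))\<^sup>2 \<le> Re (\<omega> (outer x x)) * Re (\<omega> (outer y y))"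
proof -
  have nq: "\<And>v. nn (\<omega> (outer v v))" using pos_iff[OF l] p by blast
  define a where "a = \<omega> (outer x y)"
  have hb: "\<omega> (outer y x) = cnj a" unfolding a_def by (rule herm[OF l p])
  define N where "N = (cmod a)\<^sup>2"
  have aa: "cnj a * a = of_real N" unfolding N_def by (metis complex_norm_square mult.commute)
  have aa': "a * cnj a = of_real N" unfolding N_def by (metis complex_norm_square)
  have key: "0 \<le> Re (\<omega> (outer x x)) - 2 * s * (cmod a)\<^sup>2 + s\<^sup>2 * ((cmod a)\<^sup>2 * Re (\<omega> (outer y y)))" for s :: real
  proof -
    define c where "c = - of_real s * a"
    have "nn (\<omega> (outer (x + c *s y) (x + c *s y)))" by (rule nq)
    then have n1: "nn (\<omega> (outer x x) + cnj c * a + c * cnj a + c * cnj c * \<omega> (outer y y))"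
      unfolding q_expand[OF l] a_def[symmetric] hb .
    have e1: "cnj c * a = - of_real (s * N)"
    proof -
      have "cnj c * a = - (of_real s * (cnj a * a))" by (simp add: c_def mult.assoc)
      then show ?thesis by (simp add: aa)
    qed
    have e2: "c * cnj a = - of_real (s * N)"
    proof -
      have "c * cnj a = - (of_real s * (a * cnj a))" by (simp add: c_def mult.assoc)
      then show ?thesis by (simp add: aa')
    qed
    have e3: "c * cnj c = of_real (s\<^sup>2 * N)"
    proof -
      have "c * cnj c = of_real s * of_real s * (a * cnj a)" by (simp add: c_def mult_ac)
      then show ?thesis by (simp add: aa' power2_eq_square)
    qed
    have "0 \<le> Re (\<omega> (outer x x) + cnj c * a + c * cnj a + c * cnj c * \<omega> (outer y y))"
      using n1 by (simp add: nn_iff)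
    also have "\<dots> = Re (\<omega> (outer x x)) - 2 * s * (cmod a)\<^sup>2 + s\<^sup>2 * ((cmod a)\<^sup>2 * Re (\<omega> (outer y y)))"
      unfolding e1 e2 e3 N_def[symmetric] by (simp add: mult_ac)
    finally show ?thesis .
  qed
  have Cn: "0 \<le> (cmod a)\<^sup>2 * Re (\<omega> (outer y y))" using nq[of y] by (simp add: nn_iff)
  have "((cmod a)\<^sup>2)\<^sup>2 \<le> Re (\<omega> (outer x x)) * ((cmod a)\<^sup>2 * Re (\<omega> (outer y y)))"
    by (rule disc[OF key Cn])
  then have "(cmod a)\<^sup>2 * (cmod a)\<^sup>2 \<le> (cmod a)\<^sup>2 * (Re (\<omega> (outer x x)) * Re (\<omega> (outer y y)))"
    by (simp add: power2_eq_square mult_ac)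
  note ineq = this
  show ?thesis
  proof (cases "a = 0")
    case True
    then show ?thesis using nq[of x] nq[of y] by (simp add: nn_iff a_def[symmetric])
  next
    case False
    then have "0 < (cmod a)\<^sup>2" by simp
    then show ?thesis using ineq mult_le_cancel_left_pos unfolding a_def by blast
  qed
qed

lemma ifmult4: "(if P then u else 0) * (v::complex) = (if P then u * v else 0)" by simp

lemma q_axis: "lin \<omega> \<Longrightarrow> \<omega> (outer x (axis a 1)) = (\<Sum>i\<in>UNIV. x$i * \<omega> (E i a))"
  by (subst lin_outer, assumption) (simp add: cnj_axis_nth1 ifmult4)

lemma vstate_E: "vstate z (E i j) = z$j * cnj (z$i)"
  by (simp add: vstate_outer)

lemma dec:
  assumes "finite I"
  shows "lin \<omega> \<Longrightarrow> pos \<omega> \<Longrightarrow> (\<forall>i j. i \<notin> I \<or> j \<notin> I \<longrightarrow> \<omega> (E i j) = 0) \<Longrightarrow>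
    \<exists>zs. (\<forall>z\<in>set zs. z \<noteq> 0) \<and> (\<forall>M. \<omega> M = (\<Sum>z\<leftarrow>zs. vstate z M))"
  using assms
proof (induction I arbitrary: \<omega> rule: finite_induct)
  case empty
  have "\<omega> M = 0" for M by (subst lin_dens[OF empty(1)]) (simp add: empty(3))
  then show ?case by (intro exI[of _ "[]"]) simp
next
  case (insert a I \<omega>)
  note l = insert(4) and p = insert(5) and supp = insert(6)
  have nq: "\<And>v. nn (\<omega> (outer v v))" using pos_iff[OF l] p by blast
  define d where "d = Re (\<omega> (E a a))"
  have daa: "\<omega> (E a a) = of_real d" using nq[of "axis a 1"] unfolding d_def
    by (simp add: nn_iff complex_eq_iff)
  have d0: "0 \<le> d" using nq[of "axis a 1"] unfolding d_def by (simp add: nn_iff)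
  have hE: "\<omega> (E j i) = cnj (\<omega> (E i j))" for i j by (rule herm[OF l p])
  show ?case
  proof (cases "d = 0")
    case True
    have z1: "\<omega> (E a j) = 0" for j
      using cs[OF l p, of "axis a 1" "axis j 1"] True unfolding d_def by simp
    have z2: "\<omega> (E i a) = 0" for i
      using cs[OF l p, of "axis i 1" "axis a 1"] True unfolding d_def by simp
    have "\<forall>i j. i \<notin> I \<or> j \<notin> I \<longrightarrow> \<omega> (E i j) = 0"
    proof (intro allI impI)
      fix i j assume "i \<notin> I \<or> j \<notin> I"
      then show "\<omega> (E i j) = 0"
        using supp[rule_format, of i j] z1[of j] z2[of i] by auto
    qed
    then show ?thesis using insert.IH[OF l p] by blast
  next
    case False
    then have dpos: "0 < d" using d0 by simp
    define z :: "complex^'a" where "z = (\<chi> j. \<omega> (E a j) / of_real (sqrt d))"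
    define \<omega>' where "\<omega>' = (\<lambda>M. \<omega> M - vstate z M)"
    have l': "lin \<omega>'"
      using l lin_vstate[of z] unfolding lin_def \<omega>'_def by (simp add: algebra_simps)
    have zz: "z$j * cnj (z$i) = \<omega> (E a j) * \<omega> (E i a) / of_real d" for i j
    proof -
      have "z$j * cnj (z$i) = \<omega> (E a j) * cnj (\<omega> (E a i)) / (of_real (sqrt d) * of_real (sqrt d))"
        by (simp add: z_def)
      also have "\<dots> = \<omega> (E a j) * \<omega> (E i a) / of_real d"
      proof -
        have c1: "cnj (\<omega> (E a i)) = \<omega> (E i a)" by (rule hE[symmetric])
        have c2: "of_real (sqrt d) * of_real (sqrt d) = (of_real d :: complex)"
          using dpos by (simp flip: of_real_mult)
        show ?thesis by (simp only: c1 c2)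
      qed
      finally show ?thesis .
    qed
    have cz: "cinner x z = \<omega> (outer x (axis a 1)) / of_real (sqrt d)" for x
    proof -
      have "cinner x z = (\<Sum>j\<in>UNIV. x$j * cnj (\<omega> (E a j)) / of_real (sqrt d))"
        by (simp add: cinner_def z_def)
      also have "\<dots> = (\<Sum>j\<in>UNIV. x$j * \<omega> (E j a) / of_real (sqrt d))"
        by (intro sum.cong refl) (subst hE[of a], simp)
      also have "\<dots> = \<omega> (outer x (axis a 1)) / of_real (sqrt d)"
        by (subst q_axis[OF l]) (simp add: sum_divide_distrib)
      finally show ?thesis .
    qed
    have p': "pos \<omega>'"
    proof (subst pos_iff[OF l'], intro allI)
      fix x
      define w where "w = \<omega> (outer x (axis a 1))"
      have "\<omega>' (outer x x) = \<omega> (outer x x) - cnj (cinner x z) * cinner x z"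
        by (simp add: \<omega>'_def vstate_outer cinner_commute[of z x])
      also have "cnj (cinner x z) * cinner x z = of_real ((cmod w)\<^sup>2 / d)"
      proof -
        have "cnj (cinner x z) * cinner x z = of_real ((cmod (cinner x z))\<^sup>2)"
          by (metis complex_norm_square mult.commute)
        also have "(cmod (cinner x z))\<^sup>2 = (cmod w)\<^sup>2 / d"
          using dpos by (simp add: cz w_def norm_divide power_divide)
        finally show ?thesis .
      qed
      finally have e: "\<omega>' (outer x x) = \<omega> (outer x x) - of_real ((cmod w)\<^sup>2 / d)" .
      have "(cmod w)\<^sup>2 \<le> Re (\<omega> (outer x x)) * d"
        using cs[OF l p, of x "axis a 1"] unfolding w_def d_def .
      then have "(cmod w)\<^sup>2 / d \<le> Re (\<omega> (outer x x))"
        using dpos by (simp add: divide_le_eq)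
      then show "nn (\<omega>' (outer x x))" using nq[of x] unfolding e by (simp add: nn_iff)
    qed
    have supp': "\<forall>i j. i \<notin> I \<or> j \<notin> I \<longrightarrow> \<omega>' (E i j) = 0"
    proof (intro allI impI)
      fix i j assume ij: "i \<notin> I \<or> j \<notin> I"
      have e: "\<omega>' (E i j) = \<omega> (E i j) - \<omega> (E a j) * \<omega> (E i a) / of_real d"
        by (simp add: \<omega>'_def vstate_E zz)
      show "\<omega>' (E i j) = 0"
      proof (cases "i = a")
        case True
        then show ?thesis unfolding e using daa dpos by simp
      next
        case ia: False
        show ?thesis
        proof (cases "j = a")
          case True
          then show ?thesis unfolding e using daa dpos by simp
        next
          case False
          then have "i \<notin> insert a I \<or> j \<notin> insert a I" using ij ia by simp
          then show ?thesis unfolding e using supp by auto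
        qed
      qed
    qed
    obtain zs where zs: "\<forall>z\<in>set zs. z \<noteq> 0" "\<forall>M. \<omega>' M = (\<Sum>z\<leftarrow>zs. vstate z M)"
      using insert.IH[OF l' p' supp'] by blast
    have "z$a \<noteq> 0" using daa dpos by (simp add: z_def)
    then have "z \<noteq> 0" by auto
    moreover have "\<omega> M = (\<Sum>z\<leftarrow>z # zs. vstate z M)" for M
      using zs(2)[rule_format, of M] by (simp add: \<omega>'_def algebra_simps)
    ultimately show ?thesis using zs(1) by (intro exI[of _ "z # zs"]) auto
  qed
qed

lemma dec_univ:
  fixes \<omega> :: "complex^'k::finite^'k \<Rightarrow> complex"
  assumes "lin \<omega>" "pos \<omega>"
  shows "\<exists>zs. (\<forall>z\<in>set zs. z \<noteq> 0) \<and> (\<forall>M. \<omega> M = (\<Sum>z\<leftarrow>zs. vstate z M))"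
  using dec[of "UNIV :: 'k set" \<omega>] assms by simp

definition csubspace :: "(complex^'k) set \<Rightarrow> bool" where
  "csubspace V \<longleftrightarrow> 0 \<in> V \<and> (\<forall>x\<in>V. \<forall>y\<in>V. x + y \<in> V) \<and> (\<forall>c. \<forall>x\<in>V. c *s x \<in> V)"

lemma scaleR_vec_cs: "c *\<^sub>R (x::complex^'k) = complex_of_real c *s x"
  unfolding vec_eq_iff vector_scaleR_component vector_smult_component by (simp add: scaleR_conv_of_real)

lemma csubspace_subspace: "csubspace V \<Longrightarrow> subspace V"
  by (simp add: csubspace_def subspace_def scaleR_vec_cs)

lemma csubspace_diff: "csubspace V \<Longrightarrow> x \<in> V \<Longrightarrow> y \<in> V \<Longrightarrow> x - y \<in> V"
  using csubspace_subspace subspace_diff by blast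

lemma cinner_vec_expand: "(x::complex^'k) = (\<Sum>b\<in>UNIV. (x$b) *s axis b 1)"
  by (simp add: vec_eq_iff sum_component axis_def)

lemma proj_exists:
  fixes V :: "(complex^'k::finite) set"
  assumes V: "csubspace V"
  obtains Q where "cadj Q = Q" "Q ** Q = Q" "range (\<lambda>v. Q *v v) = V" "\<And>v. v \<in> V \<Longrightarrow> Q *v v = v"
    "\<And>v. Q *v v \<in> V"
proof -
  have sV: "subspace V" using csubspace_subspace[OF V] .
  have spanV: "span V = V" using sV by (simp add: span_eq_iff)
  have ex: "\<exists>y. y \<in> V \<and> (\<forall>w\<in>V. cinner (x - y) w = 0)" for x
  proof -
    obtain y z where yz: "y \<in> span V" "\<And>w. w \<in> span V \<Longrightarrow> orthogonal z w" "x = y + z"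
      using orthogonal_subspace_decomp_exists[of V x] by blast
    have "cinner (x - y) w = 0" if w: "w \<in> V" for w
    proof -
      have iw: "\<i> *s w \<in> V" using V w by (simp add: csubspace_def)
      have r1: "Re (cinner z w) = 0" using yz(2)[of w] w spanV by (simp add: orthogonal_def inner_cinner)
      have r2: "Re (cinner z (\<i> *s w)) = 0" using yz(2)[of "\<i> *s w"] iw spanV
        by (simp add: orthogonal_def inner_cinner)
      then have "Im (cinner z w) = 0" by (simp add: cinner_scale_right)
      with r1 have "cinner z w = 0" by (simp add: complex_eq_iff)
      then show ?thesis using yz(3) by simp
    qed
    then show ?thesis using yz(1) spanV by auto
  qed
  define P where "P x = (SOME y. y \<in> V \<and> (\<forall>w\<in>V. cinner (x - y) w = 0))" for x
  have P: "P x \<in> V" "\<forall>w\<in>V. cinner (x - P x) w = 0" for x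
    using someI_ex[OF ex[of x]] unfolding P_def[symmetric] by auto
  have uniq: "P x = y" if "y \<in> V" "\<forall>w\<in>V. cinner (x - y) w = 0" for x y
  proof -
    have d: "P x - y \<in> V" using csubspace_diff[OF V P(1) that(1)] .
    have "cinner (P x - y) (P x - y) = cinner ((x - y) - (x - P x)) (P x - y)"
      by (simp add: algebra_simps)
    also have "\<dots> = 0" using that(2) P(2)[of x] d by (simp add: cinner_diff_left)
    finally show ?thesis by (simp add: cinner_self_eq_0)
  qed
  have Pfix: "v \<in> V \<Longrightarrow> P v = v" for v by (rule uniq) auto
  have Padd: "P (x + y) = P x + P y" for x y
  proof (rule uniq)
    show "P x + P y \<in> V" using V P(1) by (simp add: csubspace_def)
    show "\<forall>w\<in>V. cinner (x + y - (P x + P y)) w = 0"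
    proof
      fix w assume "w \<in> V"
      have "x + y - (P x + P y) = (x - P x) + (y - P y)" by simp
      then have "cinner (x + y - (P x + P y)) w = cinner (x - P x) w + cinner (y - P y) w"
        by (simp only: cinner_add_left)
      then show "cinner (x + y - (P x + P y)) w = 0" 
        using P(2) \<open>w \<in> V\<close> by simp
    qed
  qed
  have Pscale: "P (c *s x) = c *s P x" for c x
  proof (rule uniq)
    show "c *s P x \<in> V" using V P(1) by (simp add: csubspace_def)
    show "\<forall>w\<in>V. cinner (c *s x - c *s P x) w = 0"
    proof
      fix w assume "w \<in> V"
      have "c *s x - c *s P x = c *s (x - P x)" by (simp add: vector_ssub_ldistrib)
      then have "cinner (c *s x - c *s P x) w = c * cinner (x - P x) w"
        by (simp only: cinner_scale_left)
      then show "cinner (c *s x - c *s P x) w = 0"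
        using P(2) \<open>w \<in> V\<close> by simp
    qed
  qed
  have P0: "P 0 = 0" using Pscale[of 0 0] by simp
  have Psum: "P (sum g S) = (\<Sum>s\<in>S. P (g s))" for g and S :: "'b set"
    by (induction S rule: infinite_finite_induct) (auto simp: P0 Padd)
  define Q :: "complex^'k^'k" where "Q = (\<chi> a b. (P (axis b 1))$a)"
  have Qv: "Q *v x = P x" for x
  proof -
    have "P x = P (\<Sum>b\<in>UNIV. (x$b) *s axis b 1)" by (subst cinner_vec_expand) simp
    also have "\<dots> = (\<Sum>b\<in>UNIV. (x$b) *s P (axis b 1))" by (simp add: Psum Pscale)
    also have "\<dots> = Q *v x" by (simp add: Q_def matrix_vector_mult_def vec_eq_iff sum_component mult.commute)
    finally show ?thesis by simp
  qed
  have sa: "cinner (P x) y = cinner x (P y)" for x y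
  proof -
    have a: "cinner (P x) (y - P y) = 0" using P(2)[of y] P(1)[of x]
      by (metis cinner_commute complex_cnj_zero)
    have b: "cinner (x - P x) (P y) = 0" using P(2)[of x] P(1)[of y] by blast
    have "cinner (P x) y = cinner (P x) (P y)" using a by (simp add: cinner_diff_right)
    also have "\<dots> = cinner x (P y)" using b by (simp add: cinner_diff_left)
    finally show ?thesis .
  qed
  show ?thesis
  proof
    show "cadj Q = Q"
      by (rule mat_eq_cinner) (simp only: cinner_adj[symmetric] Qv sa)
    show "Q ** Q = Q"
      by (simp add: matrix_eq matrix_vector_mul_assoc[symmetric] Qv Pfix P(1))
    show "range (\<lambda>v. Q *v v) = V"
      using P(1) Pfix by (auto simp: Qv image_iff) (metis)
    show "\<And>v. v \<in> V \<Longrightarrow> Q *v v = v" by (simp add: Qv Pfix)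
    show "\<And>v. Q *v v \<in> V" by (simp add: Qv P(1))
  qed
qed

lemma plus_fun_apply' [simp]: "(f + g) x = f x + (g x :: 'b::plus)" by (simp add: plus_fun_def)

lemma state_lin: "is_state \<omega> \<Longrightarrow> lin \<omega>" by (simp add: is_state_alt)
lemma state_pos: "is_state \<omega> \<Longrightarrow> pos \<omega>" by (simp add: is_state_alt)
lemma state_one: "is_state \<omega> \<Longrightarrow> \<omega> (mat 1) = 1" by (simp add: is_state_alt)

lemma vstate_one: "vstate z (mat 1) = of_real ((norm z)\<^sup>2)"
  by (simp add: vstate_def cinner_self)

lemma vstate_state: "norm z = 1 \<Longrightarrow> is_state (vstate z)"
  by (simp add: is_state_alt lin_vstate pos_vstate vstate_one)

lemma lin_comb: "lin \<omega> \<Longrightarrow> lin \<omega>' \<Longrightarrow> lin (a *\<^sub>R \<omega> + b *\<^sub>R \<omega>')"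
  unfolding lin_def by (simp add: scaleR_conv_of_real algebra_simps)

lemma nn_comb: "nn x \<Longrightarrow> nn y \<Longrightarrow> 0 \<le> a \<Longrightarrow> 0 \<le> b \<Longrightarrow> nn (a *\<^sub>R x + b *\<^sub>R y)"
  by (simp add: nn_iff)

lemma convex_states: "convex (state_space :: (complex^'k::finite^'k \<Rightarrow> complex) set)"
  unfolding convex_def state_space_def
proof (intro ballI allI impI, simp)
  fix x y :: "complex^'k^'k \<Rightarrow> complex" and u v :: real
  assume x: "is_state x" and y: "is_state y" and uv: "0 \<le> u" "0 \<le> v" "u + v = 1"
  have "lin (u *\<^sub>R x + v *\<^sub>R y)" using lin_comb state_lin x y by blast
  moreover have "pos (u *\<^sub>R x + v *\<^sub>R y)"
    using state_pos[OF x] state_pos[OF y] uv unfolding pos_def by (simp add: nn_comb)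
  moreover have "(u *\<^sub>R x + v *\<^sub>R y) (mat 1) = 1"
    using state_one[OF x] state_one[OF y] uv by (simp add: scaleR_conv_of_real flip: distrib_right of_real_add)
  ultimately show "is_state (u *\<^sub>R x + v *\<^sub>R y)" by (simp add: is_state_alt)
qed

lemma of_real_sum_list: "(\<Sum>z\<leftarrow>zs. complex_of_real (g z)) = of_real (\<Sum>z\<leftarrow>zs. g z)"
  by (induction zs) auto

locale psetup =
  fixes L :: "(complex^'k::finite) set" and Q :: "complex^'k^'k"
  assumes csub: "csubspace L" and Qadj: "cadj Q = Q" and QQ: "Q ** Q = Q"
    and Qin: "\<And>v. Q *v v \<in> L" and Qfix: "\<And>v. v \<in> L \<Longrightarrow> Q *v v = v"
begin

lemma Qsa: "cinner (Q *v x) y = cinner x (Q *v y)"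
  using cinner_adj[of Q x y] Qadj by simp

lemma QQv: "Q *v (Q *v x) = Q *v x" by (simp add: matrix_vector_mul_assoc QQ)

definition X where "X = mat 1 - Q"

lemma X_adj: "cadj X ** X = X"
proof -
  have "cadj X = X" by (simp add: X_def cadj_diff Qadj)
  moreover have "X ** X = X"
    unfolding matrix_eq
    by (simp add: X_def matrix_vector_mul_assoc[symmetric] matrix_vector_mult_diff_rdistrib
        matrix_vector_mult_diff_distrib QQv)
  ultimately show ?thesis by simp
qed

lemma Q_adj: "cadj Q ** Q = Q" by (simp add: Qadj QQ)

lemma state_Q_bounds:
  assumes s: "is_state \<omega>"
  shows "Im (\<omega> Q) = 0" "0 \<le> Re (\<omega> Q)" "Re (\<omega> Q) \<le> 1"
proof -
  have l: "lin \<omega>" and p: "pos \<omega>" and o: "\<omega> (mat 1) = 1" using s by (auto simp: is_state_alt)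
  have "nn (\<omega> Q)" using p unfolding pos_def by (metis Q_adj)
  moreover have "nn (\<omega> X)" using p unfolding pos_def by (metis X_adj)
  moreover have "\<omega> X = 1 - \<omega> Q" by (simp add: X_def lin_diff[OF l] o)
  ultimately show "Im (\<omega> Q) = 0" "0 \<le> Re (\<omega> Q)" "Re (\<omega> Q) \<le> 1" by (auto simp: nn_iff)
qed

lemma dec_FK:
  assumes s: "is_state \<omega>" and q: "\<omega> Q = 1"
  shows "\<exists>zs. (\<forall>z\<in>set zs. z \<noteq> 0 \<and> z \<in> L) \<and> (\<forall>M. \<omega> M = (\<Sum>z\<leftarrow>zs. vstate z M))"
proof -
  have l: "lin \<omega>" and p: "pos \<omega>" and o: "\<omega> (mat 1) = 1" using s by (auto simp: is_state_alt)
  obtain zs where zs: "\<forall>z\<in>set zs. z \<noteq> 0" "\<forall>M. \<omega> M = (\<Sum>z\<leftarrow>zs. vstate z M)"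
    using dec_univ[OF l p] by blast
  have "\<omega> X = 0" by (simp add: X_def lin_diff[OF l] o q)
  then have "\<omega> (cadj X ** X) = 0" by (simp add: X_adj)
  then have "(\<Sum>z\<leftarrow>zs. vstate z (cadj X ** X)) = 0" using zs(2) by simp
  then have "(\<Sum>z\<leftarrow>zs. complex_of_real ((norm (X *v z))\<^sup>2)) = 0"
    by (simp only: vstate_adj)
  then have "(\<Sum>z\<leftarrow>zs. (norm (X *v z))\<^sup>2) = 0"
    by (simp only: of_real_sum_list of_real_eq_0_iff)
  then have "\<forall>r\<in>set (map (\<lambda>z. (norm (X *v z))\<^sup>2) zs). r = 0"
    by (subst sum_list_nonneg_eq_0_iff[symmetric]) auto
  then have "X *v z = 0" if "z \<in> set zs" for z using that by auto
  then have "z \<in> L" if "z \<in> set zs" for z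
    using that Qin[of z]
    by (auto simp: X_def matrix_vector_mult_diff_rdistrib)
  then show ?thesis using zs by blast
qed

lemma FK_QAQ:
  assumes s: "is_state \<omega>" and q: "\<omega> Q = 1"
  shows "\<omega> (Q ** A ** Q) = \<omega> A"
proof -
  obtain zs where zs: "\<forall>z\<in>set zs. z \<noteq> 0 \<and> z \<in> L" "\<forall>M. \<omega> M = (\<Sum>z\<leftarrow>zs. vstate z M)"
    using dec_FK[OF s q] by blast
  have "vstate z (Q ** A ** Q) = vstate z A" if "z \<in> L" for z
  proof -
    have "(Q ** A ** Q) *v z = Q *v (A *v (Q *v z))"
      by (simp add: matrix_vector_mul_assoc matrix_mul_assoc)
    then have "vstate z (Q ** A ** Q) = cinner (Q *v (A *v (Q *v z))) z"
      by (simp add: vstate_def)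
    also have "\<dots> = cinner (A *v z) z" using that by (simp add: Qsa Qfix)
    finally show ?thesis by (simp add: vstate_def)
  qed
  then have "(\<Sum>z\<leftarrow>zs. vstate z (Q ** A ** Q)) = (\<Sum>z\<leftarrow>zs. vstate z A)"
    using zs(1) by (metis (no_types, lifting) map_eq_conv)
  then show ?thesis using zs(2) by simp
qed

definition FK :: "(complex^'k^'k \<Rightarrow> complex) set" where
  "FK = {\<omega> \<in> state_space. \<omega> Q = 1}"

lemma FK_face: "FK face_of state_space"
  unfolding face_of_def
proof (intro conjI ballI impI)
  show "FK \<subseteq> state_space" by (auto simp: FK_def)
  show "convex FK"
    unfolding convex_def
  proof (intro ballI allI impI)
    fix x y :: "complex^'k^'k \<Rightarrow> complex" and u v :: real
    assume xy: "x \<in> FK" "y \<in> FK" and uv: "0 \<le> u" "0 \<le> v" "u + v = 1"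
    have "u *\<^sub>R x + v *\<^sub>R y \<in> state_space"
      using convex_states xy uv unfolding convex_def FK_def by blast
    moreover have "(u *\<^sub>R x + v *\<^sub>R y) Q = 1"
      using xy uv by (simp add: FK_def scaleR_conv_of_real flip: distrib_right of_real_add)
    ultimately show "u *\<^sub>R x + v *\<^sub>R y \<in> FK" by (simp add: FK_def)
  qed
  fix a b x
  assume a: "a \<in> state_space" and b: "b \<in> state_space" and x: "x \<in> FK" and seg: "x \<in> open_segment a b"
  obtain u where u: "0 < u" "u < 1" "x = (1 - u) *\<^sub>R a + u *\<^sub>R b"
    using seg by (auto simp: in_segment)
  have sa: "is_state a" and sb: "is_state b" using a b by (auto simp: state_space_def)
  have "(1 - u) *\<^sub>R a Q + u *\<^sub>R b Q = 1"
    using x u(3) by (simp add: FK_def)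
  then have "Re ((1 - u) *\<^sub>R a Q + u *\<^sub>R b Q) = 1" by simp
  then have "1 = (1 - u) * Re (a Q) + u * Re (b Q)" by simp
  moreover note state_Q_bounds[OF sa] state_Q_bounds[OF sb]
  ultimately have "Re (a Q) = 1" "Re (b Q) = 1"
    using u(1,2) by (smt (verit) mult_left_le mult_le_cancel_left1)+
  then have "a Q = 1" "b Q = 1"
    using state_Q_bounds[OF sa] state_Q_bounds[OF sb] by (auto simp: complex_eq_iff)
  then show "a \<in> FK" "b \<in> FK" using a b by (auto simp: FK_def)
qed

end

lemma mv_sum: "(A::complex^'a^'b) *v sum g S = (\<Sum>s\<in>S. A *v g s)"
  by (induction S rule: infinite_finite_induct) (auto simp: matrix_vector_right_distrib)

context psetup
begin

lemma L0: "0 \<in> L" using csub by (simp add: csubspace_def)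
lemma Ladd: "x \<in> L \<Longrightarrow> y \<in> L \<Longrightarrow> x + y \<in> L" using csub by (simp add: csubspace_def)
lemma Lscale: "x \<in> L \<Longrightarrow> c *s x \<in> L" using csub by (simp add: csubspace_def)
lemma Lsum: "(\<And>s. s \<in> S \<Longrightarrow> g s \<in> L) \<Longrightarrow> sum g S \<in> L"
  by (induction S rule: infinite_finite_induct) (auto simp: L0 Ladd)

abbreviation BL where "BL \<equiv> bounded_ops_on L"

lemma bopD:
  assumes "T \<in> BL"
  shows "\<And>x. x \<in> L \<Longrightarrow> T x \<in> L" "\<And>x y. x \<in> L \<Longrightarrow> y \<in> L \<Longrightarrow> T (x + y) = T x + T y"
    "\<And>c x. x \<in> L \<Longrightarrow> T (c *s x) = c *s T x" "\<And>x. x \<notin> L \<Longrightarrow> T x = 0"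
  using assms by (auto simp: bounded_ops_on_def)

lemma bop_zero: "T \<in> BL \<Longrightarrow> T 0 = 0"
  using bopD(3)[of T 0 0] L0 by simp

lemma bop_sum: "T \<in> BL \<Longrightarrow> (\<And>s. s \<in> S \<Longrightarrow> g s \<in> L) \<Longrightarrow> T (sum g S) = (\<Sum>s\<in>S. T (g s))"
proof (induction S rule: infinite_finite_induct)
  case (infinite A) then show ?case by (simp add: bop_zero)
next
  case empty then show ?case by (simp add: bop_zero)
next
  case (insert x F)
  have "sum g F \<in> L" using insert by (auto intro: Lsum)
  then show ?case using insert bopD(2)[of T "g x" "sum g F"] by auto
qed

definition matof :: "(complex^'k \<Rightarrow> complex^'k) \<Rightarrow> complex^'k^'k" where
  "matof T = (\<chi> a b. (T (Q *v axis b 1))$a)"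

definition Tof :: "complex^'k^'k \<Rightarrow> complex^'k \<Rightarrow> complex^'k" where
  "Tof A = (\<lambda>x. if x \<in> L then Q *v (A *v x) else 0)"

lemma matof_mv: assumes T: "T \<in> BL" shows "matof T *v v = T (Q *v v)"
proof -
  have "Q *v v = Q *v (\<Sum>b\<in>UNIV. (v$b) *s axis b 1)" by (subst cinner_vec_expand) simp
  also have "\<dots> = (\<Sum>b\<in>UNIV. (v$b) *s (Q *v axis b 1))" by (simp add: mv_sum mv_scale)
  moreover have "T (\<Sum>b\<in>UNIV. (v$b) *s (Q *v axis b 1)) = (\<Sum>b\<in>UNIV. T ((v$b) *s (Q *v axis b 1)))"
    by (rule bop_sum[OF T]) (simp add: Lscale Qin)
  ultimately have "T (Q *v v) = (\<Sum>b\<in>UNIV. T ((v$b) *s (Q *v axis b 1)))" by simp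
  also have "\<dots> = (\<Sum>b\<in>UNIV. (v$b) *s T (Q *v axis b 1))"
    using bopD(3)[OF T] Qin by simp
  also have "\<dots> = matof T *v v"
    by (simp add: matof_def matrix_vector_mult_def vec_eq_iff sum_component mult.commute)
  finally show ?thesis by simp
qed

lemma matof_eq: "T \<in> BL \<Longrightarrow> (\<And>v. M *v v = T (Q *v v)) \<Longrightarrow> matof T = M"
  by (simp add: matrix_eq matof_mv)

lemma Tof_bop: "Tof A \<in> BL"
  unfolding bounded_ops_on_def Tof_def
  by (auto simp: Qin Ladd Lscale matrix_vector_right_distrib mv_scale)

lemma bop_add: "T \<in> BL \<Longrightarrow> S \<in> BL \<Longrightarrow> (\<lambda>x. T x + S x) \<in> BL"
  unfolding bounded_ops_on_def by (auto simp: Ladd vector_sadd_rdistrib vector_add_ldistrib)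

lemma bop_scale: "T \<in> BL \<Longrightarrow> (\<lambda>x. c *s T x) \<in> BL"
  unfolding bounded_ops_on_def by (auto simp: Lscale vector_smult_assoc mult.commute)

lemma id_bop: "id_on L \<in> BL"
  unfolding bounded_ops_on_def id_on_def by (auto simp: Ladd Lscale)

lemma matof_add: "matof (\<lambda>x. T x + S x) = matof T + matof S"
  by (simp add: matof_def vec_eq_iff)

lemma matof_scale: "matof (\<lambda>x. c *s T x) = cmat_smult c (matof T)"
  by (simp add: matof_def vec_eq_iff cmat_smult_def)

lemma matof_id: "matof (id_on L) = Q"
  by (rule matof_eq[OF id_bop]) (simp add: id_on_def Qin)

lemma Tof_add: "Tof (A + B) = (\<lambda>x. Tof A x + Tof B x)"
  by (auto simp: Tof_def matrix_vector_mult_add_rdistrib matrix_vector_right_distrib)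

lemma Tof_scale: "Tof (cmat_smult c A) = (\<lambda>x. c *s Tof A x)"
  by (auto simp: Tof_def cmat_smult_mv mv_scale)

lemma Tof_one: "Tof (mat 1) = id_on L"
  by (auto simp: Tof_def id_on_def Qfix)

lemma Tof_Q: "Tof Q = id_on L"
  by (auto simp: Tof_def id_on_def Qfix QQv)

lemma Tof_matof: "T \<in> BL \<Longrightarrow> Tof (matof T) = T"
  by (auto simp: Tof_def matof_mv Qfix bopD)

lemma matof_Tof: "matof (Tof A) = Q ** A ** Q"
  by (rule matof_eq[OF Tof_bop]) (simp add: Tof_def Qin matrix_vector_mul_assoc matrix_mul_assoc)

lemma adjT:
  assumes T: "T \<in> BL" and S: "S \<in> BL" and adj: "\<forall>x\<in>L. \<forall>y\<in>L. cinner (T x) y = cinner x (S y)"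
    and w: "w \<in> L"
  shows "cadj (matof T) *v w = S w"
proof (rule vec_eq_cinner[symmetric])
  fix x
  have "cinner x (cadj (matof T) *v w) = cinner (matof T *v x) w" by (simp add: cinner_adj)
  also have "\<dots> = cinner (T (Q *v x)) w" by (simp add: matof_mv[OF T])
  also have "\<dots> = cinner (Q *v x) (S w)" using adj Qin w by blast
  also have "\<dots> = cinner x (S w)" using bopD(1)[OF S w] by (simp add: Qsa Qfix)
  finally show "cinner x (S w) = cinner x (cadj (matof T) *v w)" by simp
qed

definition Phi :: "(complex^'k^'k \<Rightarrow> complex) \<Rightarrow> ((complex^'k \<Rightarrow> complex^'k) \<Rightarrow> complex)" where
  "Phi \<omega> = (\<lambda>T. if T \<in> BL then \<omega> (matof T) else 0)"

definition Psi :: "((complex^'k \<Rightarrow> complex^'k) \<Rightarrow> complex) \<Rightarrow> (complex^'k^'k \<Rightarrow> complex)" where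
  "Psi \<phi> = (\<lambda>A. \<phi> (Tof A))"

lemma Phi_state:
  assumes w: "\<omega> \<in> FK"
  shows "Phi \<omega> \<in> state_space_on L"
proof -
  have s: "is_state \<omega>" and q: "\<omega> Q = 1" using w by (auto simp: FK_def state_space_def)
  have l: "lin \<omega>" and p: "pos \<omega>" using s by (auto simp: is_state_alt)
  have 3: "Phi \<omega> (S \<circ> T) \<in> \<real> \<and> 0 \<le> Re (Phi \<omega> (S \<circ> T))"
    if T: "T \<in> BL" and S: "S \<in> BL" and adj: "\<forall>x\<in>L. \<forall>y\<in>L. cinner (T x) y = cinner x (S y)" for T S
  proof (cases "S \<circ> T \<in> BL")
    case True
    have "matof (S \<circ> T) = cadj (matof T) ** matof T"
    proof (rule matof_eq[OF True])
      fix v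
      have "(cadj (matof T) ** matof T) *v v = cadj (matof T) *v T (Q *v v)"
        by (simp add: matrix_vector_mul_assoc[symmetric] matof_mv[OF T])
      also have "\<dots> = S (T (Q *v v))" using adjT[OF T S adj] bopD(1)[OF T] Qin by blast
      finally show "(cadj (matof T) ** matof T) *v v = (S \<circ> T) (Q *v v)" by simp
    qed
    then show ?thesis using True p unfolding pos_def nn_def Phi_def by simp
  next
    case False
    then show ?thesis by (simp add: Phi_def)
  qed
  show ?thesis
    unfolding state_space_on_def is_state_on_def
    using 3
    by (auto simp: Phi_def bop_add bop_scale matof_add matof_scale lin_add[OF l] lin_smult[OF l]
        id_bop matof_id q)
qed

lemma bop_rank1: "a \<in> L \<Longrightarrow> b \<in> L \<Longrightarrow> (\<lambda>y. if y \<in> L then cinner y a *s b else 0) \<in> BL"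
  unfolding bounded_ops_on_def
  by (auto simp: Lscale Ladd cinner_add_left cinner_scale_left vector_sadd_rdistrib vector_smult_assoc)

lemma Psi_FK:
  assumes ph: "\<phi> \<in> state_space_on L" and u: "u \<in> L" "cinner u u = 1"
  shows "Psi \<phi> \<in> FK"
proof -
  have st: "is_state_on L \<phi>" using ph by (simp add: state_space_on_def)
  note add = st[unfolded is_state_on_def, THEN conjunct1]
  note sc = st[unfolded is_state_on_def, THEN conjunct2, THEN conjunct1]
  note ps = st[unfolded is_state_on_def, THEN conjunct2, THEN conjunct2, THEN conjunct1]
  note one = st[unfolded is_state_on_def, THEN conjunct2, THEN conjunct2, THEN conjunct2, THEN conjunct1]
  have l: "lin (Psi \<phi>)"
    unfolding lin_def Psi_def using add sc Tof_bop by (simp add: Tof_add Tof_scale)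
  have p: "pos (Psi \<phi>)"
  proof (subst pos_iff[OF l], intro allI)
    fix x :: "complex^'k"
    define w where "w = Q *v x"
    have wL: "w \<in> L" by (simp add: w_def Qin)
    define T where "T = (\<lambda>y. if y \<in> L then cinner y w *s u else 0)"
    define S where "S = (\<lambda>y. if y \<in> L then cinner y u *s w else 0)"
    have TB: "T \<in> BL" unfolding T_def by (rule bop_rank1[OF wL u(1)])
    have SB: "S \<in> BL" unfolding S_def by (rule bop_rank1[OF u(1) wL])
    have adj: "\<forall>y\<in>L. \<forall>y'\<in>L. cinner (T y) y' = cinner y (S y')"
      by (simp add: T_def S_def cinner_scale_left cinner_scale_right cinner_commute[of u])
    have eq: "Tof (outer x x) = S \<circ> T"
    proof
      fix y
      show "Tof (outer x x) y = (S \<circ> T) y"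
      proof (cases "y \<in> L")
        case True
        have "cinner y x = cinner y w"
          using True by (simp add: w_def Qsa[symmetric] Qfix)
        then show ?thesis using True u
          by (simp add: Tof_def outer_mv mv_scale T_def S_def Lscale cinner_scale_left w_def)
      next
        case False
        then show ?thesis using L0 by (simp add: Tof_def T_def S_def)
      qed
    qed
    show "nn (Psi \<phi> (outer x x))"
      using ps TB SB adj unfolding Psi_def eq nn_def by blast
  qed
  have "Psi \<phi> (mat 1) = 1" using one by (simp add: Psi_def Tof_one)
  moreover have "Psi \<phi> Q = 1" using one by (simp add: Psi_def Tof_Q)
  ultimately show ?thesis using l p by (simp add: FK_def state_space_def is_state_alt)
qed

lemma Psi_Phi: "\<omega> \<in> FK \<Longrightarrow> Psi (Phi \<omega>) = \<omega>"
  by (auto simp: Psi_def Phi_def Tof_bop matof_Tof FK_def state_space_def FK_QAQ)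

lemma Phi_Psi: "\<phi> \<in> state_space_on L \<Longrightarrow> Phi (Psi \<phi>) = \<phi>"
  by (auto simp: Psi_def Phi_def Tof_matof state_space_on_def is_state_on_def)

lemma affiso:
  assumes u: "u \<in> L" "cinner u u = 1"
  shows "affinely_isomorphic FK (state_space_on L)"
  unfolding affinely_isomorphic_def
proof (intro exI conjI ballI)
  show "bij_betw Phi FK (state_space_on L)"
    by (rule bij_betw_byWitness[where f'=Psi]) (auto simp: Psi_Phi Phi_Psi Phi_state Psi_FK[OF _ u])
  fix x y and t :: real
  show "Phi ((1 - t) *\<^sub>R x + t *\<^sub>R y) = (1 - t) *\<^sub>R Phi x + t *\<^sub>R Phi y"
    by (auto simp: Phi_def)
qed

end

lemma tensor_add_right: "tensor x (y + y') = tensor x y + tensor x y'"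
  by (simp add: tensor_def vec_eq_iff distrib_left)
lemma tensor_scale_right: "tensor x (c *s y) = c *s tensor x y"
  by (simp add: tensor_def vec_eq_iff mult_ac)
lemma tensor_scale_left: "tensor (c *s x) y = c *s tensor x y"
  by (simp add: tensor_def vec_eq_iff mult_ac)
lemma tensor_zero_right [simp]: "tensor x 0 = 0"
  by (simp add: tensor_def vec_eq_iff)
lemma tensor_sum_right: "tensor x (sum g S) = (\<Sum>s\<in>S. tensor x (g s))"
  by (induction S rule: infinite_finite_induct) (auto simp: tensor_add_right)

lemma cinner_tensor: "cinner (tensor x y) (tensor x' y') = cinner x x' * cinner y y'"
proof -
  have "cinner (tensor x y) (tensor x' y') = (\<Sum>ij\<in>UNIV \<times> UNIV. x$(fst ij) * y$(snd ij) * cnj (x'$(fst ij) * y'$(snd ij)))"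
    by (simp add: cinner_def tensor_def UNIV_Times_UNIV)
  also have "\<dots> = (\<Sum>i\<in>UNIV. \<Sum>j\<in>UNIV. x$i * y$j * cnj (x'$i * y'$j))"
    by (simp add: sum.cartesian_product case_prod_beta)
  also have "\<dots> = (\<Sum>i\<in>UNIV. \<Sum>j\<in>UNIV. (x$i * cnj (x'$i)) * (y$j * cnj (y'$j)))"
    by (simp add: mult_ac)
  also have "\<dots> = cinner x x' * cinner y y'"
    by (simp add: cinner_def sum_product)
  finally show ?thesis .
qed

lemma norm_from_cinner: "cinner a a = cinner b b * cinner c c \<Longrightarrow> norm a = norm b * norm c"
proof -
  assume h: "cinner a a = cinner b b * cinner c c"
  then have "(norm a)\<^sup>2 = (norm b * norm c)\<^sup>2"
    unfolding cinner_self power_mult_distrib by (metis of_real_eq_iff of_real_mult)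
  then show ?thesis by (simp add: power2_eq_iff_nonneg)
qed

lemma norm_tensor: "norm (tensor x y) = norm x * norm y"
  by (rule norm_from_cinner) (simp add: cinner_tensor)

lemma norm_cscale: "norm (c *s (x::complex^'k)) = cmod c * norm x"
proof -
  have "cinner (c *s x) (c *s x) = (c * cnj c) * cinner x x"
    by (simp add: cinner_scale_left cinner_scale_right mult_ac)
  then have "complex_of_real ((norm (c *s x))\<^sup>2) = of_real ((cmod c)\<^sup>2) * of_real ((norm x)\<^sup>2)"
    by (simp only: cinner_self complex_norm_square[symmetric])
  then have "(norm (c *s x))\<^sup>2 = (cmod c * norm x)\<^sup>2"
    by (metis of_real_eq_iff of_real_mult power_mult_distrib)
  then show ?thesis by (simp add: power2_eq_iff_nonneg)
qed

lemma smult_sum: "(c::complex) *s sum (g :: _ \<Rightarrow> complex^'k) S = (\<Sum>s\<in>S. c *s g s)"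
  by (induction S rule: infinite_finite_induct) (auto simp: vector_add_ldistrib)

lemma cspan_csubspace: "csubspace (cspan S)"
  unfolding csubspace_def
proof (intro conjI ballI allI)
  show "0 \<in> cspan S" unfolding cspan_def by (rule CollectI, rule exI[of _ "{}"]) auto
next
  fix x y assume x: "x \<in> cspan S" and y: "y \<in> cspan S"
  obtain T1 c1 where 1: "x = (\<Sum>v\<in>T1. c1 v *s v)" "finite T1" "T1 \<subseteq> S" using x by (auto simp: cspan_def)
  obtain T2 c2 where 2: "y = (\<Sum>v\<in>T2. c2 v *s v)" "finite T2" "T2 \<subseteq> S" using y by (auto simp: cspan_def)
  define c where "c v = (if v \<in> T1 then c1 v else 0) + (if v \<in> T2 then c2 v else 0)" for v
  have a: "(\<Sum>v\<in>T1 \<union> T2. (if v \<in> T1 then c1 v else 0) *s v) = x"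
    unfolding 1 by (rule sum.mono_neutral_cong_right) (use 1 2 in auto)
  have b: "(\<Sum>v\<in>T1 \<union> T2. (if v \<in> T2 then c2 v else 0) *s v) = y"
    unfolding 2 by (rule sum.mono_neutral_cong_right) (use 1 2 in auto)
  have "x + y = (\<Sum>v\<in>T1 \<union> T2. c v *s v)"
    unfolding c_def vector_sadd_rdistrib sum.distrib a b ..
  then show "x + y \<in> cspan S" using 1 2 unfolding cspan_def by blast
next
  fix a x assume x: "x \<in> cspan S"
  obtain T1 c1 where 1: "x = (\<Sum>v\<in>T1. c1 v *s v)" "finite T1" "T1 \<subseteq> S" using x by (auto simp: cspan_def)
  have "a *s x = (\<Sum>v\<in>T1. (a * c1 v) *s v)"
    unfolding 1 smult_sum by (simp add: vector_smult_assoc)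
  then show "a *s x \<in> cspan S" unfolding cspan_def
    by (intro CollectI exI[of _ T1] exI[of _ "\<lambda>v. a * c1 v"]) (use 1 in auto)
qed

lemma cspan_base: "v \<in> S \<Longrightarrow> v \<in> cspan S"
  unfolding cspan_def by (rule CollectI, rule exI[of _ "{v}"], rule exI[of _ "\<lambda>_. 1"]) simp

lemma vstate_scale: "vstate (c *s w) M = (c * cnj c) * vstate w M"
  by (simp add: vstate_def mv_scale cinner_scale_left cinner_scale_right mult_ac)

lemma mix:
  fixes x y :: "'a::real_vector"
  assumes "\<epsilon> \<noteq> 1"
  shows "(1 - \<epsilon>) *\<^sub>R ((1 / (1 - \<epsilon>)) *\<^sub>R x + (- (\<epsilon> / (1 - \<epsilon>))) *\<^sub>R y) + \<epsilon> *\<^sub>R y = x"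
proof -
  have a: "(1 - \<epsilon>) * (1 / (1 - \<epsilon>)) = 1" and b: "(1 - \<epsilon>) * (- (\<epsilon> / (1 - \<epsilon>))) = - \<epsilon>"
    using assms by (auto simp: field_simps)
  have "(1 - \<epsilon>) *\<^sub>R ((1 / (1 - \<epsilon>)) *\<^sub>R x + (- (\<epsilon> / (1 - \<epsilon>))) *\<^sub>R y)
     = ((1 - \<epsilon>) * (1 / (1 - \<epsilon>))) *\<^sub>R x + ((1 - \<epsilon>) * (- (\<epsilon> / (1 - \<epsilon>)))) *\<^sub>R y"
    by (simp only: scaleR_add_right scaleR_scaleR)
  also have "\<dots> = x + (- \<epsilon>) *\<^sub>R y" by (simp only: a b scaleR_one)
  finally show ?thesis by simp
qed

lemma sum_list_idx: "(\<Sum>z\<leftarrow>zs. h z) = (\<Sum>j\<in>{0..<length zs}. h (zs!j))"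
  by (simp add: sum_list_sum_nth)

lemma conv_list:
  fixes C :: "(complex^'k::finite^'k \<Rightarrow> complex) set"
  assumes C: "convex C"
    and nz: "\<forall>z\<in>set zs. z \<noteq> 0"
    and un: "\<forall>z\<in>set zs. vstate (complex_of_real (1 / norm z) *s z) \<in> C"
    and w: "(\<Sum>z\<leftarrow>zs. (norm z)\<^sup>2) = 1"
  shows "(\<lambda>M. \<Sum>z\<leftarrow>zs. vstate z M) \<in> C"
proof -
  define a where "a j = (norm (zs!j))\<^sup>2" for j
  define y where "y j = vstate (complex_of_real (1 / norm (zs!j)) *s (zs!j))" for j
  have "(\<Sum>j\<in>{0..<length zs}. a j *\<^sub>R y j) \<in> C"
  proof (rule convex_sum[OF _ C])
    show "(\<Sum>j\<in>{0..<length zs}. a j) = 1" using w by (simp add: a_def sum_list_idx)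
    show "\<And>i. i \<in> {0..<length zs} \<Longrightarrow> 0 \<le> a i" by (simp add: a_def)
    show "\<And>i. i \<in> {0..<length zs} \<Longrightarrow> y i \<in> C" using un by (simp add: y_def)
  qed simp
  moreover have "(\<Sum>j\<in>{0..<length zs}. a j *\<^sub>R y j) = (\<lambda>M. \<Sum>z\<leftarrow>zs. vstate z M)"
  proof
    fix M
    have "(\<Sum>j\<in>{0..<length zs}. a j *\<^sub>R y j) M = (\<Sum>j\<in>{0..<length zs}. a j *\<^sub>R y j M)"
      by (simp add: sum_fun_apply)
    also have "\<dots> = (\<Sum>j\<in>{0..<length zs}. vstate (zs!j) M)"
    proof (rule sum.cong[OF refl])
      fix j assume j: "j \<in> {0..<length zs}"
      then have z0: "zs!j \<noteq> 0" using nz by simp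
      define z where "z = zs!j"
      have zz: "z = complex_of_real (norm z) *s (complex_of_real (1 / norm z) *s z)"
        using z0 by (simp add: z_def vector_smult_assoc flip: of_real_mult)
      have "vstate z M = of_real ((norm z)\<^sup>2) * vstate (complex_of_real (1 / norm z) *s z) M"
        by (subst zz) (simp only: vstate_scale complex_cnj_complex_of_real power2_eq_square of_real_mult)
      then show "a j *\<^sub>R y j M = vstate (zs!j) M"
        by (simp add: a_def y_def z_def scaleR_conv_of_real)
    qed
    also have "\<dots> = (\<Sum>z\<leftarrow>zs. vstate z M)" by (simp add: sum_list_idx)
    finally show "(\<Sum>j\<in>{0..<length zs}. a j *\<^sub>R y j) M = (\<Sum>z\<leftarrow>zs. vstate z M)" .
  qed
  ultimately show ?thesis by simp
qed

locale msetup =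
  fixes e :: "nat \<Rightarrow> complex^'m::finite" and f :: "nat \<Rightarrow> complex^'n::finite" and p :: nat
    and L :: "(complex^('m \<times> 'n)) set"
  assumes p1: "p \<ge> 1" and ne: "\<forall>i\<in>{1..p}. norm (e i) = 1" and nf: "\<forall>i\<in>{1..p}. norm (f i) = 1"
    and cl: "\<forall>i\<in>{1..p}. cline (e i) = cline (e 1)"
    and Ldef: "L = {tensor (e 1) y | y. y \<in> cspan (f ` {1..p})}"
begin

definition g where "g i = tensor (e i) (f i)"
definition ssum :: "complex^('m \<times> 'n)^('m \<times> 'n) \<Rightarrow> real" where "ssum A = (\<Sum>i\<in>{1..p}. (norm (A *v g i))\<^sup>2)"

lemma one_in: "1 \<in> {1..p}" using p1 by simp
lemma ne1: "norm (e 1) = 1" using ne one_in by blast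

lemma phase:
  assumes i: "i \<in> {1..p}"
  obtains c where "e i = c *s e 1" "cmod c = 1"
proof -
  have "e i \<in> cline (e i)" unfolding cline_def by (rule range_eqI[of _ _ 1]) simp
  then have "e i \<in> cline (e 1)" using cl i by blast
  then obtain c where c: "e i = c *s e 1" by (auto simp: cline_def)
  then have "cmod c = 1" using ne i ne1 by (metis mult.right_neutral norm_cscale)
  then show ?thesis using c that by blast
qed

lemma L_csub: "csubspace L"
  unfolding csubspace_def Ldef
proof (intro conjI ballI allI)
  show "0 \<in> {tensor (e 1) y |y. y \<in> cspan (f ` {1..p})}"
    using cspan_csubspace[of "f ` {1..p}"] by (auto simp: csubspace_def intro!: exI[of _ 0])
next
  fix x y assume "x \<in> {tensor (e 1) y |y. y \<in> cspan (f ` {1..p})}" "y \<in> {tensor (e 1) y |y. y \<in> cspan (f ` {1..p})}"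
  then obtain a b where "x = tensor (e 1) a" "a \<in> cspan (f ` {1..p})" "y = tensor (e 1) b" "b \<in> cspan (f ` {1..p})"
    by auto
  then show "x + y \<in> {tensor (e 1) y |y. y \<in> cspan (f ` {1..p})}"
    using cspan_csubspace[of "f ` {1..p}"]
    by (auto simp: csubspace_def tensor_add_right[symmetric] intro!: exI[of _ "a + b"])
next
  fix c x assume "x \<in> {tensor (e 1) y |y. y \<in> cspan (f ` {1..p})}"
  then obtain a where "x = tensor (e 1) a" "a \<in> cspan (f ` {1..p})" by auto
  then show "c *s x \<in> {tensor (e 1) y |y. y \<in> cspan (f ` {1..p})}"
    using cspan_csubspace[of "f ` {1..p}"]
    by (auto simp: csubspace_def tensor_scale_right[symmetric] intro!: exI[of _ "c *s a"])
qed

lemma g_in: assumes i: "i \<in> {1..p}" shows "g i \<in> L"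
proof -
  obtain c where c: "e i = c *s e 1" "cmod c = 1" using phase[OF i] by blast
  have "f i \<in> cspan (f ` {1..p})" using i by (intro cspan_base) simp
  then have "c *s f i \<in> cspan (f ` {1..p})" using cspan_csubspace[of "f ` {1..p}"]
    unfolding csubspace_def by blast
  moreover have "g i = tensor (e 1) (c *s f i)" by (simp add: g_def c tensor_scale_left tensor_scale_right)
  ultimately show ?thesis unfolding Ldef by blast
qed

lemma norm_g: "i \<in> {1..p} \<Longrightarrow> norm (g i) = 1"
  using ne nf by (simp add: g_def norm_tensor)

lemma u_in: "tensor (e 1) (f 1) \<in> L" "cinner (tensor (e 1) (f 1)) (tensor (e 1) (f 1)) = 1"
  using g_in[OF one_in] norm_g[OF one_in] by (auto simp: g_def cinner_self)

lemma Ag: assumes i: "i \<in> {1..p}" shows "norm (A *v g i) = norm (A *v tensor (e 1) (f i))"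
proof -
  obtain c where c: "e i = c *s e 1" "cmod c = 1" using phase[OF i] by blast
  show ?thesis by (simp add: g_def c tensor_scale_left mv_scale norm_cscale)
qed

lemma ssum_nonneg: "0 \<le> ssum A" by (simp add: ssum_def sum_nonneg)

lemma bnd:
  assumes y: "y \<in> cspan (f ` {1..p})"
  shows "\<exists>B\<ge>0. \<forall>A. (norm (A *v tensor (e 1) y))\<^sup>2 \<le> B * ssum A"
proof -
  obtain T c where Tc: "y = (\<Sum>v\<in>T. c v *s v)" "finite T" "T \<subseteq> f ` {1..p}"
    using y by (auto simp: cspan_def)
  define B0 where "B0 = (\<Sum>v\<in>T. cmod (c v))"
  have B0: "0 \<le> B0" by (simp add: B0_def sum_nonneg)
  have "(norm (A *v tensor (e 1) y))\<^sup>2 \<le> B0\<^sup>2 * ssum A" for A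
  proof -
    have eq: "A *v tensor (e 1) y = (\<Sum>v\<in>T. c v *s (A *v tensor (e 1) v))"
      by (simp add: Tc(1) tensor_sum_right tensor_scale_right mv_sum mv_scale)
    have vb: "norm (A *v tensor (e 1) v) \<le> sqrt (ssum A)" if "v \<in> T" for v
    proof -
      have "v \<in> f ` {1..p}" using Tc(3) that by blast
      then obtain i where i: "i \<in> {1..p}" "v = f i" by blast
      have "(norm (A *v g i))\<^sup>2 \<le> ssum A"
        unfolding ssum_def by (rule member_le_sum[OF i(1)]) auto
      then show ?thesis by (simp add: Ag[OF i(1)] i(2) real_le_rsqrt)
    qed
    have "norm (A *v tensor (e 1) y) \<le> (\<Sum>v\<in>T. norm (c v *s (A *v tensor (e 1) v)))"
      unfolding eq by (rule norm_sum)
    also have "\<dots> = (\<Sum>v\<in>T. cmod (c v) * norm (A *v tensor (e 1) v))"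
      by (simp add: norm_cscale)
    also have "\<dots> \<le> (\<Sum>v\<in>T. cmod (c v) * sqrt (ssum A))"
      by (intro sum_mono mult_left_mono vb) auto
    also have "\<dots> = B0 * sqrt (ssum A)" by (simp add: B0_def sum_distrib_right)
    finally have "norm (A *v tensor (e 1) y) \<le> B0 * sqrt (ssum A)" .
    then have "(norm (A *v tensor (e 1) y))\<^sup>2 \<le> (B0 * sqrt (ssum A))\<^sup>2"
      by (rule power_mono) simp
    also have "\<dots> = B0\<^sup>2 * ssum A" using ssum_nonneg by (simp add: power_mult_distrib)
    finally show ?thesis .
  qed
  then show ?thesis using B0 by (intro exI[of _ "B0\<^sup>2"]) auto
qed

lemma bnd_list:
  "(\<forall>z\<in>set zs. z \<in> L) \<Longrightarrow> \<exists>C\<ge>0. \<forall>A. (\<Sum>z\<leftarrow>zs. (norm (A *v z))\<^sup>2) \<le> C * ssum A"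
proof (induction zs)
  case Nil then show ?case by (intro exI[of _ 0]) simp
next
  case (Cons z zs)
  have "\<exists>C\<ge>0. \<forall>A. (\<Sum>z\<leftarrow>zs. (norm (A *v z))\<^sup>2) \<le> C * ssum A" using Cons by simp
  then obtain C where C: "C \<ge> 0" "\<forall>A. (\<Sum>z\<leftarrow>zs. (norm (A *v z))\<^sup>2) \<le> C * ssum A" by blast
  obtain y where y: "z = tensor (e 1) y" "y \<in> cspan (f ` {1..p})" using Cons(2) by (auto simp: Ldef)
  obtain B where B: "B \<ge> 0" "\<forall>A. (norm (A *v z))\<^sup>2 \<le> B * ssum A" using bnd[OF y(2)] y(1) by auto
  show ?case
  proof (intro exI[of _ "B + C"] conjI allI)
    show "0 \<le> B + C" using B C by simp
    fix A
    show "(\<Sum>z\<leftarrow>z # zs. (norm (A *v z))\<^sup>2) \<le> (B + C) * ssum A"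
      using B(2)[rule_format, of A] C(2)[rule_format, of A] by (simp add: distrib_right)
  qed
qed

end

lemma sep_sub: "(sep_states :: (complex^('m::finite \<times> 'n::finite)^('m \<times> 'n) \<Rightarrow> complex) set) \<subseteq> state_space"
  unfolding sep_states_def
proof (rule hull_minimal)
  show "convex (state_space :: (complex^('m \<times> 'n)^('m \<times> 'n) \<Rightarrow> complex) set)" by (rule convex_states)
  show "{vstate (tensor (x::complex^'m) (y::complex^'n)) |x y. norm x = 1 \<and> norm y = 1} \<subseteq> state_space"
    by (auto simp: state_space_def norm_tensor intro!: vstate_state)
qed

locale mp = msetup e f p L + psetup L Q
  for e :: "nat \<Rightarrow> complex^'m::finite" and f :: "nat \<Rightarrow> complex^'n::finite" and p L Q
begin

lemma FK_sub: "FK \<subseteq> sep_states"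
proof
  fix \<omega> assume w: "\<omega> \<in> FK"
  have s: "is_state \<omega>" and q: "\<omega> Q = 1" using w by (auto simp: FK_def state_space_def)
  obtain zs where zs: "\<forall>z\<in>set zs. z \<noteq> 0 \<and> z \<in> L" "\<forall>M. \<omega> M = (\<Sum>z\<leftarrow>zs. vstate z M)"
    using dec_FK[OF s q] by blast
  have "complex_of_real (\<Sum>z\<leftarrow>zs. (norm z)\<^sup>2) = (\<Sum>z\<leftarrow>zs. vstate z (mat 1))"
    by (simp only: vstate_one of_real_sum_list)
  also have "\<dots> = 1" using zs(2) state_one[OF s] by simp
  finally have wsum: "(\<Sum>z\<leftarrow>zs. (norm z)\<^sup>2) = 1" by (metis of_real_eq_1_iff)
  have un: "vstate (complex_of_real (1 / norm z) *s z) \<in> sep_states" if z: "z \<in> set zs" for z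
  proof -
    obtain y where y: "z = tensor (e 1) y" using zs(1) z by (auto simp: Ldef)
    have nz: "norm z = norm y" using ne1 by (simp add: y norm_tensor)
    have z0: "z \<noteq> 0" using zs(1) z by blast
    have "complex_of_real (1 / norm z) *s z = tensor (e 1) (complex_of_real (1 / norm z) *s y)"
      by (simp add: y tensor_scale_right)
    moreover have "norm (complex_of_real (1 / norm z) *s y) = 1"
    proof -
      have "norm y > 0" using z0 y by auto
      then show ?thesis using nz by (simp add: norm_cscale norm_divide)
    qed
    ultimately have "vstate (complex_of_real (1 / norm z) *s z) \<in>
        {vstate (tensor (x::complex^'m) (y::complex^'n)) |x y. norm x = 1 \<and> norm y = 1}"
      unfolding mem_Collect_eq
      by (intro exI[of _ "e 1"] exI[of _ "complex_of_real (1 / norm z) *s y"]) (use ne1 in simp)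
    then show ?thesis unfolding sep_states_def by (rule hull_inc)
  qed
  have "(\<lambda>M. \<Sum>z\<leftarrow>zs. vstate z M) \<in> sep_states"
    by (rule conv_list) (use zs un wsum in \<open>auto simp: sep_states_def convex_convex_hull\<close>)
  moreover have "\<omega> = (\<lambda>M. \<Sum>z\<leftarrow>zs. vstate z M)" using zs(2) by auto
  ultimately show "\<omega> \<in> sep_states" by simp
qed

lemma gens_FK: assumes i: "i \<in> {1..p}" shows "vstate (g i) \<in> FK"
proof -
  have "is_state (vstate (g i))" using norm_g[OF i] by (rule vstate_state)
  moreover have "vstate (g i) Q = 1"
    using g_in[OF i] norm_g[OF i] by (simp add: vstate_def Qfix cinner_self)
  ultimately show ?thesis by (simp add: FK_def state_space_def)
qed

lemma FK_min:
  assumes G: "G' face_of sep_states" and gens: "{vstate (g i) | i. i \<in> {1..p}} \<subseteq> G'"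
  shows "FK \<subseteq> G'"
proof
  fix \<omega> assume w: "\<omega> \<in> FK"
  have s: "is_state \<omega>" and q: "\<omega> Q = 1" using w by (auto simp: FK_def state_space_def)
  have l: "lin \<omega>" using s by (rule state_lin)
  define \<omega>0 where "\<omega>0 = (\<Sum>i\<in>{1..p}. (1 / real p) *\<^sub>R vstate (g i))"
  have cardp: "(\<Sum>i\<in>{1..p}. 1 / real p) = 1" using p1 by simp
  have w0G: "\<omega>0 \<in> G'" unfolding \<omega>0_def
    by (rule convex_sum) (use face_of_imp_convex[OF G] gens cardp p1 in auto)
  have w0FK: "\<omega>0 \<in> FK" unfolding \<omega>0_def
    by (rule convex_sum) (use face_of_imp_convex[OF FK_face] gens_FK cardp p1 in auto)
  have s0: "is_state \<omega>0" and q0: "\<omega>0 Q = 1" using w0FK by (auto simp: FK_def state_space_def)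
  have w0A: "\<omega>0 (cadj A ** A) = of_real (ssum A / real p)" for A
  proof -
    have "\<omega>0 (cadj A ** A) = (\<Sum>i\<in>{1..p}. complex_of_real ((norm (A *v g i))\<^sup>2 / real p))"
      unfolding \<omega>0_def sum_fun_apply scaleR_fun_apply
      by (rule sum.cong[OF refl]) (simp only: vstate_adj scaleR_conv_of_real of_real_mult of_real_divide, simp)
    also have "\<dots> = of_real (ssum A / real p)"
      by (simp only: ssum_def sum_divide_distrib of_real_sum)
    finally show ?thesis .
  qed
  obtain zs where zs: "\<forall>z\<in>set zs. z \<noteq> 0 \<and> z \<in> L" "\<forall>M. \<omega> M = (\<Sum>z\<leftarrow>zs. vstate z M)"
    using dec_FK[OF s q] by blast
  obtain C where C: "C \<ge> 0" "\<forall>A. (\<Sum>z\<leftarrow>zs. (norm (A *v z))\<^sup>2) \<le> C * ssum A"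
    using bnd_list[of zs] zs(1) by blast
  define r where "r (A::complex^('m \<times> 'n)^('m \<times> 'n)) = (\<Sum>z\<leftarrow>zs. (norm (A *v z))\<^sup>2)" for A
  have wA: "\<omega> (cadj A ** A) = of_real (r A)" for A
    using zs(2) by (simp only: r_def vstate_adj of_real_sum_list)
  define D where "D = C * real p + 1"
  have D: "D > 0" using C(1) by (simp add: D_def add_nonneg_pos)
  have dom: "r A \<le> D * (ssum A / real p)" for A
  proof -
    have "r A \<le> C * ssum A" using C(2) by (simp add: r_def)
    also have "\<dots> = (C * real p) * (ssum A / real p)" using p1 by simp
    also have "\<dots> \<le> D * (ssum A / real p)"
      unfolding D_def by (rule mult_right_mono) (auto simp: ssum_nonneg)
    finally show ?thesis .
  qed
  define \<epsilon> where "\<epsilon> = 1 / (D + 1)"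
  have e0: "0 < \<epsilon>" and e1: "\<epsilon> < 1" and eD: "\<epsilon> * D \<le> 1"
    using D by (auto simp: \<epsilon>_def field_simps)
  define \<sigma> where "\<sigma> = (1 / (1 - \<epsilon>)) *\<^sub>R \<omega>0 + (- (\<epsilon> / (1 - \<epsilon>))) *\<^sub>R \<omega>"
  have ls: "lin \<sigma>" unfolding \<sigma>_def using lin_comb state_lin[OF s0] l by blast
  have ps: "pos \<sigma>" unfolding pos_def
  proof
    fix A :: "complex^('m \<times> 'n)^('m \<times> 'n)"
    have "\<sigma> (cadj A ** A) = of_real ((ssum A / real p - \<epsilon> * r A) / (1 - \<epsilon>))"
      using e1 by (simp add: \<sigma>_def w0A wA scaleR_conv_of_real diff_divide_distrib)
    moreover have "\<epsilon> * r A \<le> ssum A / real p"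
    proof -
      have "\<epsilon> * r A \<le> \<epsilon> * (D * (ssum A / real p))" by (rule mult_left_mono[OF dom]) (use e0 in simp)
      also have "\<dots> = (\<epsilon> * D) * (ssum A / real p)" by simp
      also have "\<dots> \<le> ssum A / real p"
        by (rule mult_left_le_one_le) (use eD e0 D ssum_nonneg[of A] in auto)
      finally show ?thesis .
    qed
    ultimately show "nn (\<sigma> (cadj A ** A))" using e1 by (simp add: nn_iff)
  qed
  have o1: "\<sigma> (mat 1) = 1" using state_one[OF s0] state_one[OF s] e1
    by (simp add: \<sigma>_def scaleR_conv_of_real field_simps)
  have oQ: "\<sigma> Q = 1" using q0 q e1
    by (simp add: \<sigma>_def scaleR_conv_of_real field_simps)
  have sFK: "\<sigma> \<in> FK" using ls ps o1 oQ by (simp add: FK_def state_space_def is_state_alt)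
  have mixeq: "\<omega>0 = (1 - \<epsilon>) *\<^sub>R \<sigma> + \<epsilon> *\<^sub>R \<omega>"
    unfolding \<sigma>_def using mix[of \<epsilon> \<omega>0 \<omega>] e1 by simp
  show "\<omega> \<in> G'"
  proof (cases "\<sigma> = \<omega>")
    case True
    then have "\<omega>0 = \<omega>" using mixeq by (simp flip: scaleR_add_left)
    then show ?thesis using w0G by simp
  next
    case False
    then have "\<omega>0 \<in> open_segment \<sigma> \<omega>" using mixeq e0 e1 by (auto simp: in_segment)
    then show ?thesis using face_ofD[OF G _ _ _ w0G] FK_sub sFK w by blast
  qed
qed

end

theorem mainTheorem3:
  fixes e :: "nat \<Rightarrow> complex^'m::finite" and f :: "nat \<Rightarrow> complex^'n::finite" and p :: nat
  assumes "p \<ge> 1"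
    and "\<forall>i\<in>{1..p}. norm (e i) = 1"
    and "\<forall>i\<in>{1..p}. norm (f i) = 1"
    and "\<forall>i\<in>{1..p}. cline (e i) = cline (e 1)"
  defines "K \<equiv> (state_space :: (complex^('m \<times> 'n)^('m \<times> 'n) \<Rightarrow> complex) set)"
    and "S \<equiv> (sep_states :: (complex^('m \<times> 'n)^('m \<times> 'n) \<Rightarrow> complex) set)"
    and "L \<equiv> {tensor (e 1) y | y. y \<in> cspan (f ` {1..p})}"
  defines "F \<equiv> face_generated {vstate (tensor (e i) (f i)) | i. i \<in> {1..p}} S"
  shows "F face_of K \<and>
         (\<exists>Q. is_orth_proj Q L \<and> F = {\<omega> \<in> K. \<omega> Q = 1}) \<and>
         affinely_isomorphic F (state_space_on L)"
proof -
  interpret ms: msetup e f p L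
  proof
    show "p \<ge> 1" by (fact assms(1))
    show "\<forall>i\<in>{1..p}. norm (e i) = 1" by (fact assms(2))
    show "\<forall>i\<in>{1..p}. norm (f i) = 1" by (fact assms(3))
    show "\<forall>i\<in>{1..p}. cline (e i) = cline (e 1)" by (fact assms(4))
    show "L = {tensor (e 1) y | y. y \<in> cspan (f ` {1..p})}" by (simp add: L_def)
  qed
  obtain Q where Q: "cadj Q = Q" "Q ** Q = Q" "range (\<lambda>v. Q *v v) = L"
    "\<And>v. v \<in> L \<Longrightarrow> Q *v v = v" "\<And>v. Q *v v \<in> L"
    using proj_exists[OF ms.L_csub] by blast
  interpret mp e f p L Q
    by unfold_locales (use Q ms.L_csub in auto)
  have FKeq: "FK = {\<omega> \<in> K. \<omega> Q = 1}" by (simp add: FK_def K_def)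
  have FKS: "FK face_of S" unfolding S_def
    by (rule face_of_subset[OF FK_face FK_sub sep_sub])
  have gens: "{vstate (tensor (e i) (f i)) | i. i \<in> {1..p}} \<subseteq> FK"
    using gens_FK by (auto simp: ms.g_def)
  have FF: "F = FK"
  proof
    show "F \<subseteq> FK" unfolding F_def face_generated_def using FKS gens by blast
    show "FK \<subseteq> F" unfolding F_def face_generated_def
    proof (rule Inter_greatest)
      fix G' assume "G' \<in> {G. G face_of S \<and> {vstate (tensor (e i) (f i)) | i. i \<in> {1..p}} \<subseteq> G}"
      then have G': "G' face_of sep_states" "{vstate (ms.g i) | i. i \<in> {1..p}} \<subseteq> G'"
        by (auto simp: S_def ms.g_def)
      show "FK \<subseteq> G'" by (rule FK_min[OF G'])
    qed
  qed
  show ?thesis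
  proof (intro conjI)
    show "F face_of K" unfolding FF K_def by (rule FK_face)
    show "\<exists>Q. is_orth_proj Q L \<and> F = {\<omega> \<in> K. \<omega> Q = 1}"
      using Q FF FKeq by (auto simp: is_orth_proj_def)
    show "affinely_isomorphic F (state_space_on L)"
      unfolding FF by (rule affiso[OF ms.u_in])
  qed
qed

end
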